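(* Let $(\mathrm{FE}_{n,M,Q})_{n,M,Q\in\mathbb Z}\subseteq\mathbb N_0$ satisfy for all $n,M,Q\in\mathbb N$ that $\mathrm{FE}_{0,M,Q}=0$ and $$\mathrm{FE}_{n,M,Q}\le M^n+\sum_{l=0}^{n-1}\Big[QM^{n-l}\big(1+\mathrm{FE}_{l,M,Q}+\mathbb 1_{\mathbb N}(l)+\mathbb 1_{\mathbb N}(l)\,\mathrm{FE}_{l-1,M,Q}\big)\Big].$$ Then for all $N\in\mathbb N$, $\mathrm{FE}_{N,N,N}\le 8N^{2N}$.
   Context: $\mathbb 1_{\mathbb N}(l)$ equals $1$ if $l\in\mathbb N=\{1,2,\dots\}$ and $0$ otherwise. *)

theory Defs
  imports Main
begin

definition indN :: "int \<Rightarrow> nat" where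
  "indN l = (if l \<ge> 1 then 1 else 0)"

end

theory Submission
  imports Defs Complex_Main
begin

lemma sum_shift:
  fixes M Q :: nat and f :: "nat \<Rightarrow> nat"
  shows "(\<Sum>l<Suc n. Q * M ^ (Suc n - l) * f l) = M * (\<Sum>l<n. Q * M ^ (n - l) * f l) + Q * M * f n"
proof -
  have "(\<Sum>l<n. Q * M ^ (Suc n - l) * f l) = (\<Sum>l<n. M * (Q * M ^ (n - l) * f l))"
    by (rule sum.cong) (auto simp: Suc_diff_le)
  thus ?thesis by (simp add: sum_distrib_left)
qed

lemma Vbound:
  fixes M Q :: nat
  assumes M: "M \<ge> 1" and Q: "Q \<ge> 1" and n: "n \<ge> 1"
  shows "M ^ n + (\<Sum>l<n. Q * M ^ (n - l) * ((M*Q+M+1) ^ l + (if l \<ge> 1 then (M*Q+M+1) ^ (l - 1) else 0))) + 1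
         \<le> (M*Q+M+1) ^ n"
  using n
proof (induction n rule: dec_induct)
  case base
  show ?case by simp
next
  case (step n)
  define L where "L = M*Q+M+1"
  define f where "f l = L ^ l + (if l \<ge> 1 then L ^ (l - 1) else 0)" for l
  define S where "S = (\<Sum>l<n. Q * M ^ (n - l) * f l)"
  have IH: "M ^ n + S + 1 \<le> L ^ n" using step.IH unfolding S_def f_def L_def by simp
  have sh: "(\<Sum>l<Suc n. Q * M ^ (Suc n - l) * f l) = M * S + Q * M * f n"
    unfolding S_def by (rule sum_shift)
  have fn: "f n = L ^ n + L ^ (n - 1)" using step.hyps unfolding f_def by simp
  have Ln: "L ^ n = L * L ^ (n - 1)" using step.hyps by (metis Suc_diff_1 less_le_trans zero_less_one power_Suc le_less)
  have L1: "L ^ (n - 1) \<ge> 1" unfolding L_def by simp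
  have A: "M * (M ^ n + S + 1) \<le> M * L ^ n" using mult_le_mono2[OF IH] .
  have B: "Q * M * L ^ (n - 1) + 1 \<le> L ^ n"
  proof -
    have "Q * M * L ^ (n - 1) + 1 \<le> Q * M * L ^ (n - 1) + L ^ (n - 1)" using L1 by simp
    also have "\<dots> \<le> L * L ^ (n - 1)" unfolding L_def by (simp add: algebra_simps)
    finally show ?thesis using Ln by simp
  qed
  have "M ^ Suc n + (M * S + Q * M * f n) + 1 = M * (M ^ n + S + 1) + Q * M * L ^ n + (Q * M * L ^ (n - 1) + 1) - M"
    using fn M by (simp add: algebra_simps)
  also have "\<dots> \<le> M * L ^ n + Q * M * L ^ n + L ^ n - M" using A B by linarith
  also have "\<dots> \<le> L ^ Suc n" unfolding L_def by (simp add: algebra_simps)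
  finally have "M ^ Suc n + (\<Sum>l<Suc n. Q * M ^ (Suc n - l) * f l) + 1 \<le> L ^ Suc n" using sh by simp
  thus ?case unfolding f_def L_def .
qed

lemma final_ineq:
  fixes N :: nat assumes "N \<ge> 1"
  shows "(N*N+N+1) ^ N \<le> 8 * N ^ (2 * N)"
proof (cases "N = 1")
  case True thus ?thesis by simp
next
  case False
  hence N2: "N \<ge> 2" using assms by simp
  define x :: real where "x = 1 / N + 1 / (real N)^2"
  have eq: "real (N*N+N+1) = (real N)^2 * (1 + x)" unfolding x_def using assms
    by (simp add: field_simps power2_eq_square)
  have "(1 + x) ^ N \<le> exp x ^ N"
    by (rule power_mono) (auto simp: x_def)
  also have "\<dots> = exp (N * x)" by (simp add: exp_of_nat_mult)
  also have "N * x = 1 + 1 / N" unfolding x_def using assms by (simp add: field_simps power2_eq_square)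
  also have "exp (1 + 1 / real N) \<le> exp (3/2)"
  proof -
    have "1 / real N \<le> 1/2" using N2 by (simp add: field_simps)
    thus ?thesis by simp
  qed
  also have "exp (3/2::real) \<le> 8"
  proof -
    have "exp (3/2::real) ^ 2 = exp (of_nat 2 * (3/2))" by (rule exp_of_nat_mult[symmetric])
    also have "\<dots> = exp (of_nat 3 * 1)" by simp
    also have "\<dots> = exp 1 ^ 3" by (rule exp_of_nat_mult)
    also have "\<dots> \<le> 3 ^ 3" by (rule power_mono) (auto simp: exp_le)
    also have "\<dots> \<le> (8::real) ^ 2" by simp
    finally show ?thesis by (rule power2_le_imp_le) simp
  qed
  finally have X: "(1 + x) ^ N \<le> 8" .
  have "real ((N*N+N+1) ^ N) = ((real N)^2)^N * (1 + x) ^ N"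
    by (simp only: of_nat_power eq power_mult_distrib)
  also have "\<dots> \<le> ((real N)^2)^N * 8" by (rule mult_left_mono[OF X]) simp
  also have "\<dots> = real (8 * N ^ (2 * N))" by (simp add: power_mult)
  finally show ?thesis by linarith
qed

theorem lemma3p16:
  fixes FE :: "int \<Rightarrow> int \<Rightarrow> int \<Rightarrow> nat"
  assumes base: "\<And>M Q :: nat. M \<ge> 1 \<Longrightarrow> Q \<ge> 1 \<Longrightarrow> FE 0 (int M) (int Q) = 0"
    and rec: "\<And>n M Q :: nat. n \<ge> 1 \<Longrightarrow> M \<ge> 1 \<Longrightarrow> Q \<ge> 1 \<Longrightarrow>
      FE (int n) (int M) (int Q) \<le> M ^ n + (\<Sum>l<n. Q * M ^ (n - l) *
        (1 + FE (int l) (int M) (int Q) + indN (int l)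
           + indN (int l) * FE (int l - 1) (int M) (int Q)))"
  shows "\<And>N :: nat. N \<ge> 1 \<Longrightarrow> FE (int N) (int N) (int N) \<le> 8 * N ^ (2 * N)"
proof -
  have main: "FE (int n) (int M) (int Q) + 1 \<le> (M*Q+M+1) ^ n"
    if M: "M \<ge> 1" and Q: "Q \<ge> 1" for n M Q :: nat
  proof (induction n rule: less_induct)
    case (less n)
    show ?case
    proof (cases "n = 0")
      case True thus ?thesis using base[OF M Q] by simp
    next
      case False
      hence n1: "n \<ge> 1" by simp
      define L where "L = M*Q+M+1"
      have trm: "1 + FE (int l) (int M) (int Q) + indN (int l) + indN (int l) * FE (int l - 1) (int M) (int Q)
          \<le> L ^ l + (if l \<ge> 1 then L ^ (l - 1) else 0)" if l: "l < n" for l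
      proof -
        have a: "FE (int l) (int M) (int Q) + 1 \<le> L ^ l" using less.IH[OF l] unfolding L_def by simp
        show ?thesis
        proof (cases "l \<ge> 1")
          case True
          have "int l - 1 = int (l - 1)" using True by simp
          moreover have "FE (int (l-1)) (int M) (int Q) + 1 \<le> L ^ (l-1)"
            using less.IH[of "l-1"] l True unfolding L_def by simp
          ultimately show ?thesis using a True by (simp add: indN_def)
        next
          case False thus ?thesis using a by (simp add: indN_def)
        qed
      qed
      have "FE (int n) (int M) (int Q) \<le> M ^ n + (\<Sum>l<n. Q * M ^ (n - l) *
        (1 + FE (int l) (int M) (int Q) + indN (int l)
           + indN (int l) * FE (int l - 1) (int M) (int Q)))" by (rule rec[OF n1 M Q])
      also have "\<dots> \<le> M ^ n + (\<Sum>l<n. Q * M ^ (n - l) * (L ^ l + (if l \<ge> 1 then L ^ (l - 1) else 0)))"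
        by (intro add_left_mono sum_mono mult_left_mono trm) auto
      finally show ?thesis using Vbound[OF M Q n1] unfolding L_def by simp
    qed
  qed
  fix N :: nat assume N: "N \<ge> 1"
  have "FE (int N) (int N) (int N) + 1 \<le> (N*N+N+1) ^ N" using main[OF N N] by simp
  thus "FE (int N) (int N) (int N) \<le> 8 * N ^ (2 * N)" using final_ineq[OF N] by simp
qed

end
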